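(* Let $k\ge 0$ and $m=2k+1$. Let $R_m(\hat K)=P_m(\hat K)+\mathrm{span}\{\hat x^m\hat y-\hat x\hat y^m\}$. If $\hat v\in R_m(\hat K)$ vanishes at all points of $G\cup I$, then $\hat v\equiv 0$.
   Context: $\hat K=[-1,1]^2$; $P_m(\hat K)$ is the space of polynomials of total degree $\le m$ on $\hat K$. Let $g_{-k},\dots,g_k$ be the zeros of the Legendre polynomial of degree $2k+1$ on $[-1,1]$. $G=\{(1,g_i),(-1,g_i),(g_i,1),(g_i,-1): i=-k,\dots,k\}$ is the set of $4(2k+1)$ Gauss–Legendre points on the boundary of $\hat K$. $I$ is a set of $(2k-1)(k-1)$ points in the interior of $\hat K$ (the standard Lagrange points) that is unisolvent for $P_{2k-3}(\hat K)$, i.e. every polynomial in $P_{2k-3}(\hat K)$ is uniquely determined by its values on $I$; $I=\emptyset$ when $k\le 1$. *)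

theory Defs
  imports "HOL-Computational_Algebra.Polynomial"
begin

fun legendre :: "nat \<Rightarrow> real poly" where
  "legendre 0 = 1"
| "legendre (Suc 0) = [:0, 1:]"
| "legendre (Suc (Suc n)) =
     smult (1 / real (n + 2))
       (smult (real (2 * n + 3)) ([:0, 1:] * legendre (Suc n)) - smult (real (n + 1)) (legendre n))"

definition poly2_space :: "nat \<Rightarrow> (real \<times> real \<Rightarrow> real) set" where
  "poly2_space n = {f. \<exists>c :: nat \<Rightarrow> nat \<Rightarrow> real.
      f = (\<lambda>(x, y). \<Sum>i\<le>n. \<Sum>j\<le>n - i. c i j * x ^ i * y ^ j)}"

definition R_space :: "nat \<Rightarrow> (real \<times> real \<Rightarrow> real) set" where
  "R_space m = {v. \<exists>p \<in> poly2_space m. \<exists>d :: real.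
      v = (\<lambda>(x, y). p (x, y) + d * (x ^ m * y - x * y ^ m))}"

definition gauss_nodes :: "nat \<Rightarrow> real set" where
  "gauss_nodes n = {g. -1 \<le> g \<and> g \<le> 1 \<and> poly (legendre n) g = 0}"

definition gauss_boundary :: "nat \<Rightarrow> (real \<times> real) set" where
  "gauss_boundary n = (\<Union>g \<in> gauss_nodes n. {(1, g), (-1, g), (g, 1), (g, -1)})"

definition unisolvent :: "nat \<Rightarrow> (real \<times> real) set \<Rightarrow> bool" where
  "unisolvent n S \<longleftrightarrow> (\<forall>p \<in> poly2_space n. \<forall>q \<in> poly2_space n. (\<forall>z \<in> S. p z = q z) \<longrightarrow> p = q)"

end

theory Submission
  imports Defs
begin


lemma leg_rec: "poly (legendre (Suc (Suc n))) x =
  (real (2*n+3) * x * poly (legendre (Suc n)) x - real (n+1) * poly (legendre n) x) / real (n+2)"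
  by (simp add: field_simps)

lemma leg_one: "poly (legendre n) 1 = 1"
proof (induction n rule: legendre.induct)
  case (3 n) then show ?case by (simp only: leg_rec) (simp add: field_simps)
qed auto

lemma leg_mone: "poly (legendre n) (-1) = (-1)^n"
proof (induction n rule: legendre.induct)
  case (3 n) then show ?case by (simp only: leg_rec) (simp add: field_simps)
qed auto

lemma leg_deg: "degree (legendre n) = n \<and> coeff (legendre n) n > 0"
proof (induction n rule: legendre.induct)
  case 1 then show ?case by simp
next
  case 2 then show ?case by simp
next
  case (3 n)
  define p where "p = legendre (Suc n)"
  define q where "q = legendre n"
  have dp: "degree p = Suc n" and cp: "coeff p (Suc n) > 0" using 3 by (auto simp: p_def)
  have dq: "degree q = n" using 3 by (auto simp: q_def)
  have L: "legendre (Suc (Suc n)) = smult (1 / real (n + 2))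
       (smult (real (2 * n + 3)) ([:0, 1:] * p) - smult (real (n + 1)) q)"
    by (simp add: p_def q_def)
  have c: "coeff (legendre (Suc (Suc n))) (Suc (Suc n)) = (1 / real (n+2)) * (real (2*n+3) * coeff p (Suc n))"
  proof -
    have "coeff q (Suc (Suc n)) = 0" using dq by (simp add: coeff_eq_0)
    then show ?thesis unfolding L by (simp add: coeff_pCons)
  qed
  have cpos: "coeff (legendre (Suc (Suc n))) (Suc (Suc n)) > 0" unfolding c using cp by simp
  have "degree ([:0, 1:] * p) \<le> Suc (Suc n)"
    using degree_mult_le[of "[:0,1:]" p] dp by simp
  moreover have "degree q \<le> Suc (Suc n)" using dq by simp
  ultimately have "degree (legendre (Suc (Suc n))) \<le> Suc (Suc n)" unfolding L
    by (meson degree_diff_le degree_smult_le order_trans)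
  moreover have "degree (legendre (Suc (Suc n))) \<ge> Suc (Suc n)"
    using cpos by (intro le_degree) (metis less_irrefl)
  ultimately show ?case using cpos le_antisym by blast
qed



lemma sign_roots:
  fixes p :: "real poly"
  assumes "degree p = n" "lead_coeff p > 0" "inj_on r {..<n}"
    "\<forall>i<n. poly p (r i) = 0" "x \<notin> r ` {..<n}"
  shows "(-1) ^ card {i. i < n \<and> x < r i} * poly p x > 0"
  using assms
proof (induction n arbitrary: p)
  case 0
  then have "p = [:coeff p 0:]" by (metis degree_0_id)
  then have "poly p x = poly [:coeff p 0:] x" by (rule arg_cong)
  also have "\<dots> = lead_coeff p" using 0 by simp
  finally have "poly p x = lead_coeff p" .
  with 0 show ?case by simp
next
  case (Suc n)
  have "poly p (r n) = 0" using Suc.prems by simp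
  then obtain q where pq: "p = [:- r n, 1:] * q" by (meson dvdE poly_eq_0_iff_dvd)
  have qnz: "q \<noteq> 0" using pq Suc.prems(2) by auto
  have "degree p = degree [:- r n, 1:] + degree q" unfolding pq by (rule degree_mult_eq) (use qnz in auto)
  then have dq: "degree q = n" using Suc.prems(1) by simp
  have "lead_coeff p = lead_coeff [:- r n, 1:] * lead_coeff q" unfolding pq by (rule lead_coeff_mult)
  then have lq: "lead_coeff q > 0" using Suc.prems(2) by simp
  have inj: "inj_on r {..<n}" using Suc.prems(3) by (rule inj_on_subset) auto
  have rq: "\<forall>i<n. poly q (r i) = 0"
  proof (intro allI impI)
    fix i assume "i < n"
    then have "r i \<noteq> r n" using Suc.prems(3) by (auto dest: inj_onD)
    moreover have "poly p (r i) = 0" using Suc.prems(4) \<open>i < n\<close> by simp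
    ultimately show "poly q (r i) = 0" using pq by simp
  qed
  have xn: "x \<notin> r ` {..<n}" using Suc.prems(5) by auto
  have IH: "(-1) ^ card {i. i < n \<and> x < r i} * poly q x > 0"
    using Suc.IH[OF dq lq inj rq xn] .
  have xrn: "x \<noteq> r n" using Suc.prems(5) by auto
  have px: "poly p x = (x - r n) * poly q x" unfolding pq poly_mult by simp
  show ?case
  proof (cases "x < r n")
    case True
    then have "{i. i < Suc n \<and> x < r i} = insert n {i. i < n \<and> x < r i}" by auto
    then have "card {i. i < Suc n \<and> x < r i} = Suc (card {i. i < n \<and> x < r i})" by simp
    then have "(-1) ^ card {i. i < Suc n \<and> x < r i} * poly p x
       = ((-1) ^ card {i. i < n \<and> x < r i} * poly q x) * (r n - x)"
    proof -
      assume h: "card {i. i < Suc n \<and> x < r i} = Suc (card {i. i < n \<and> x < r i})"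
      show ?thesis unfolding px h power_Suc by (simp add: algebra_simps)
    qed
    then show ?thesis using IH True by (metis mult_pos_pos diff_gt_0_iff_gt)
  next
    case False
    then have "{i. i < Suc n \<and> x < r i} = {i. i < n \<and> x < r i}" using less_Suc_eq by auto
    then have "(-1) ^ card {i. i < Suc n \<and> x < r i} * poly p x
       = ((-1) ^ card {i. i < n \<and> x < r i} * poly q x) * (x - r n)"
    proof -
      assume h: "{i. i < Suc n \<and> x < r i} = {i. i < n \<and> x < r i}"
      show ?thesis unfolding px h by (simp add: algebra_simps)
    qed
    then show ?thesis using IH False xrn by (metis mult_pos_pos diff_gt_0_iff_gt linorder_neqE_linordered_idom)
  qed
qed



definition linv :: "nat \<Rightarrow> (nat \<Rightarrow> real) \<Rightarrow> bool" where
  "linv n r \<longleftrightarrow> (\<forall>i j. i < j \<longrightarrow> j < n \<longrightarrow> r i < r j) \<and>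
     (\<forall>i<n. -1 < r i \<and> r i < 1 \<and> poly (legendre n) (r i) = 0 \<and>
        (-1)^(n-1-i) * poly (legendre (n-1)) (r i) > 0)"

lemma linv_base: "linv 1 (\<lambda>_. 0)"
  by (simp add: linv_def)

lemma linv_step:
  assumes n1: "n \<ge> 1" and L: "linv n r"
  shows "\<exists>s. linv (Suc n) s"
proof -
  obtain n' where nn: "n = Suc n'" using n1 by (cases n) auto
  have rmono: "\<And>i j. i < j \<Longrightarrow> j < n \<Longrightarrow> r i < r j" using L by (simp add: linv_def)
  have rb1: "\<And>i. i < n \<Longrightarrow> -1 < r i" and rb2: "\<And>i. i < n \<Longrightarrow> r i < 1"
    and rroot: "\<And>i. i < n \<Longrightarrow> poly (legendre n) (r i) = 0"
    and rsign: "\<And>i. i < n \<Longrightarrow> (-1)^(n-1-i) * poly (legendre (n-1)) (r i) > 0"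
    using L by (auto simp: linv_def)
  define f where "f = legendre (Suc n)"
  define e where "e j = (if j = 0 then -1 else if j \<le> n then r (j-1) else 1)" for j
  have emono: "e i < e j" if "i < j" "j \<le> Suc n" for i j
  proof -
    consider "i = 0" "j \<le> n" | "i = 0" "j = Suc n" | "i > 0" "j \<le> n" | "i > 0" "j = Suc n"
      by (cases "i = 0"; cases "j \<le> n") (use \<open>j \<le> Suc n\<close> in auto)
    then show ?thesis
    proof cases
      case 1 then show ?thesis using that rb1[of "j-1"] by (simp add: e_def)
    next
      case 2 then show ?thesis by (simp add: e_def)
    next
      case 3 then show ?thesis using that rmono[of "i-1" "j-1"] by (simp add: e_def)
    next
      case 4 then show ?thesis using that rb2[of "i-1"] by (simp add: e_def)
    qed
  qed
  have ele: "e i \<le> e j" if "i \<le> j" "j \<le> Suc n" for i j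
    using emono[of i j] that by (cases "i = j") auto
  have e0: "e 0 = -1" and eS: "e (Suc n) = 1" by (simp_all add: e_def)
  have er: "e (Suc i) = r i" if "i < n" for i using that by (simp add: e_def)
  have esign: "(-1)^(Suc n - j) * poly f (e j) > 0" if "j \<le> Suc n" for j
  proof -
    consider "j = 0" | "j = Suc n" | "0 < j" "j \<le> n"
      by (cases "j = 0"; cases "j = Suc n") (use \<open>j \<le> Suc n\<close> in auto)
    then show ?thesis
    proof cases
      case 1
      have "(-1::real)^(Suc n) * (-1)^(Suc n) = 1" by (simp flip: power_add)
      then show ?thesis using 1 by (simp add: e_def f_def leg_mone)
    next
      case 2 then show ?thesis by (simp add: e_def f_def leg_one)
    next
      case 3
      define i where "i = j - 1"
      have i: "i < n" "j = Suc i" using 3 by (auto simp: i_def)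
      have ej: "e j = r i" using i by (simp add: e_def)
      have "poly f (r i) = - (real n / real (n+1)) * poly (legendre n') (r i)"
        using rroot[OF i(1)] unfolding f_def nn leg_rec by (simp add: field_simps)
      moreover have "(-1::real)^(Suc n - j) = - ((-1)^(n-1-i))"
      proof -
        have "Suc n - j = Suc (n-1-i)" using i by simp
        then show ?thesis by simp
      qed
      ultimately have "(-1)^(Suc n - j) * poly f (e j)
          = (real n / real (n+1)) * ((-1)^(n-1-i) * poly (legendre (n-1)) (r i))"
        using ej nn by simp
      moreover have "(-1)^(n-1-i) * poly (legendre (n-1)) (r i) > 0" using rsign i by simp
      ultimately show ?thesis using n1 by simp
    qed
  qed
  have roots: "\<exists>x. e j < x \<and> x < e (Suc j) \<and> poly f x = 0" if "j \<le> n" for j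
  proof -
    have a: "(-1)^(Suc n - j) * poly f (e j) > 0" using esign[of j] that by simp
    have b: "(-1)^(Suc n - Suc j) * poly f (e (Suc j)) > 0" using esign[of "Suc j"] that by simp
    have c: "(-1::real)^(Suc n - j) * (-1)^(Suc n - Suc j) = -1"
    proof -
      have "Suc n - j = Suc (Suc n - Suc j)" using that by simp
      then have "(-1::real)^(Suc n - j) * (-1)^(Suc n - Suc j) = - (((-1)^(Suc n - Suc j))^2)"
        by (simp add: power2_eq_square)
      also have "\<dots> = -1" by (simp flip: power_mult)
      finally show ?thesis .
    qed
    have "((-1)^(Suc n - j) * poly f (e j)) * ((-1)^(Suc n - Suc j) * poly f (e (Suc j))) > 0"
      using a b by simp
    then have "- (poly f (e j) * poly f (e (Suc j))) > 0"
      using c by (simp add: algebra_simps)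
    then have "poly f (e j) * poly f (e (Suc j)) < 0" by simp
    moreover have "e j < e (Suc j)" using emono that by simp
    ultimately show ?thesis using poly_IVT by blast
  qed
  define s where "s j = (SOME x. e j < x \<and> x < e (Suc j) \<and> poly f x = 0)" for j
  have s: "e j < s j \<and> s j < e (Suc j) \<and> poly f (s j) = 0" if "j \<le> n" for j
    unfolding s_def using someI_ex[OF roots[OF that]] .
  have "linv (Suc n) s"
    unfolding linv_def
  proof (intro conjI allI impI)
    fix i j assume ij: "i < j" "j < Suc n"
    have "s i < e (Suc i)" using s ij by simp
    also have "\<dots> \<le> e j" using ij by (intro ele) auto
    also have "\<dots> < s j" using s ij by simp
    finally show "s i < s j" .
  next
    fix j assume j: "j < Suc n"
    have "-1 \<le> e j" using ele[of 0 j] j e0 by simp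
    then show "-1 < s j" using s[of j] j by simp
    have "e (Suc j) \<le> 1" using ele[of "Suc j" "Suc n"] j eS by simp
    then show "s j < 1" using s[of j] j by simp
    show "poly (legendre (Suc n)) (s j) = 0" using s[of j] j by (simp add: f_def)
    have cardeq: "{i. i < n \<and> s j < r i} = {j..<n}"
    proof (rule set_eqI, rule iffI)
      fix i assume "i \<in> {i. i < n \<and> s j < r i}"
      then have i: "i < n" "s j < r i" by auto
      show "i \<in> {j..<n}"
      proof (rule ccontr)
        assume "i \<notin> {j..<n}"
        then have "i < j" using i by auto
        then have "e (Suc i) \<le> e j" using j by (intro ele) auto
        then show False using s[of j] j i er[of i] by simp
      qed
    next
      fix i assume "i \<in> {j..<n}"
      then have i: "j \<le> i" "i < n" by auto
      have "s j < e (Suc j)" using s[of j] j by simp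
      also have "\<dots> \<le> e (Suc i)" using i by (intro ele) auto
      finally show "i \<in> {i. i < n \<and> s j < r i}" using i er[of i] by simp
    qed
    have notr: "s j \<notin> r ` {..<n}"
    proof
      assume "s j \<in> r ` {..<n}"
      then obtain i where i: "i < n" "s j = r i" by auto
      show False
      proof (cases "j \<le> i")
        case True
        then have "i \<in> {i. i < n \<and> s j < r i}" using cardeq i by auto
        then show False using i by simp
      next
        case False
        then have "e (Suc i) \<le> e j" using j by (intro ele) auto
        then show False using s[of j] j i er[of i] by simp
      qed
    qed
    have inj: "inj_on r {..<n}"
      by (rule inj_onI) (metis lessThan_iff linorder_neqE_nat rmono less_irrefl)
    have "(-1) ^ card {i. i < n \<and> s j < r i} * poly (legendre n) (s j) > 0"
      by (rule sign_roots) (use leg_deg[of n] inj rroot notr in auto)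
    then show "(-1) ^ (Suc n - 1 - j) * poly (legendre (Suc n - 1)) (s j) > 0"
      using cardeq by simp
  qed
  then show ?thesis by blast
qed

lemma linv_exists: "n \<ge> 1 \<Longrightarrow> \<exists>r. linv n r"
proof (induction n)
  case 0 then show ?case by simp
next
  case (Suc n)
  show ?case
  proof (cases "n = 0")
    case True then show ?thesis using linv_base by auto
  next
    case False
    then obtain r where "linv n r" using Suc by auto
    then show ?thesis using linv_step False by simp
  qed
qed

lemma poly_zero_many_roots:
  fixes h :: "real poly"
  assumes "finite S" "card S > degree h" "\<forall>x\<in>S. poly h x = 0"
  shows "h = 0"
proof (rule ccontr)
  assume h: "h \<noteq> 0"
  have "card S \<le> card {x. poly h x = 0}"
    using assms(3) poly_roots_finite[OF h] by (intro card_mono) auto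
  also have "\<dots> \<le> degree h" using card_poly_roots_bound[OF h] .
  finally show False using assms(2) by simp
qed

lemma gauss_interp:
  fixes q :: "real poly"
  assumes m: "m \<ge> 1" and dq: "degree q \<le> m" and van: "\<forall>g\<in>gauss_nodes m. poly q g = 0"
  shows "q = smult (poly q 1) (legendre m)"
proof -
  obtain r where L: "linv m r" using linv_exists m by blast
  have rmono: "\<And>i j. i < j \<Longrightarrow> j < m \<Longrightarrow> r i < r j" using L by (simp add: linv_def)
  have inj: "inj_on r {..<m}"
    by (rule inj_onI) (metis lessThan_iff linorder_neqE_nat rmono less_irrefl)
  have rg: "r ` {..<m} \<subseteq> gauss_nodes m" using L by (force simp: linv_def gauss_nodes_def)
  have r1: "1 \<notin> r ` {..<m}" using L by (force simp: linv_def)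
  define h where "h = q - smult (poly q 1) (legendre m)"
  have "degree h \<le> m" unfolding h_def using dq leg_deg[of m]
    by (metis degree_diff_le degree_smult_le order_trans)
  moreover have "card (insert 1 (r ` {..<m})) = Suc m"
    using r1 inj by (simp add: card_image)
  moreover have "\<forall>x\<in>insert 1 (r ` {..<m}). poly h x = 0"
    using rg van L by (auto simp: h_def leg_one linv_def)
  ultimately have "h = 0" by (intro poly_zero_many_roots[of "insert 1 (r ` {..<m})"]) auto
  then show ?thesis by (simp add: h_def)
qed



definition ev :: "nat \<Rightarrow> (nat \<Rightarrow> nat \<Rightarrow> real) \<Rightarrow> real \<Rightarrow> real \<Rightarrow> real" where
  "ev N a x y = (\<Sum>i\<le>N. \<Sum>j\<le>N. a i j * x ^ i * y ^ j)"

definition mkp :: "nat \<Rightarrow> (nat \<Rightarrow> real) \<Rightarrow> real poly" where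
  "mkp N s = (\<Sum>j\<le>N. monom (s j) j)"

lemma poly_mkp: "poly (mkp N s) y = (\<Sum>j\<le>N. s j * y ^ j)"
  by (simp add: mkp_def poly_sum poly_monom)

lemma coeff_mkp: "coeff (mkp N s) k = (if k \<le> N then s k else 0)"
  by (simp add: mkp_def coeff_sum)

lemma degree_mkp: "degree (mkp N s) \<le> N"
  by (rule degree_le) (simp add: coeff_mkp)

lemma degree_mkp_le: "(\<forall>k. n < k \<longrightarrow> k \<le> N \<longrightarrow> s k = 0) \<Longrightarrow> degree (mkp N s) \<le> n"
  by (rule degree_le) (simp add: coeff_mkp)

lemma mkp_zero: "(\<forall>y. poly (mkp N s) y = 0) \<Longrightarrow> k \<le> N \<Longrightarrow> s k = 0"
  by (metis coeff_mkp coeff_0 poly_all_0_iff_0)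

lemma poly_le_sum: "degree (p::real poly) \<le> N \<Longrightarrow> poly p x = (\<Sum>i\<le>N. coeff p i * x ^ i)"
proof -
  assume "degree p \<le> N"
  then have "poly p x = poly (\<Sum>i\<le>N. monom (coeff p i) i) x" by (simp add: poly_as_sum_of_monoms')
  then show ?thesis by (simp add: poly_sum poly_monom)
qed

lemma ev_rows: "ev N a x y = (\<Sum>j\<le>N. (\<Sum>i\<le>N. a i j * x ^ i) * y ^ j)"
  unfolding ev_def by (subst sum.swap) (simp add: sum_distrib_right)

lemma ev_cols: "ev N a x y = (\<Sum>i\<le>N. (\<Sum>j\<le>N. a i j * y ^ j) * x ^ i)"
  unfolding ev_def by (simp add: sum_distrib_left sum_distrib_right mult_ac)

lemma ev_x: "ev N a x y = poly (mkp N (\<lambda>j. \<Sum>i\<le>N. a i j * x ^ i)) y"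
  by (simp add: ev_rows poly_mkp)

lemma ev_y: "ev N a x y = poly (mkp N (\<lambda>i. \<Sum>j\<le>N. a i j * y ^ j)) x"
  by (simp add: ev_cols poly_mkp)

lemma ev_transp: "ev N (\<lambda>i j. a j i) x y = ev N a y x"
  unfolding ev_def by (subst sum.swap) (simp add: algebra_simps)

lemma ev_add: "ev N (\<lambda>i j. f i j + g i j) x y = ev N f x y + ev N g x y"
  unfolding ev_def by (simp add: algebra_simps sum.distrib)

lemma ev_diff: "ev N (\<lambda>i j. f i j - g i j) x y = ev N f x y - ev N g x y"
  unfolding ev_def by (simp add: algebra_simps sum_subtractf)

lemma ev_delta: "i0 \<le> N \<Longrightarrow> j0 \<le> N \<Longrightarrow>
   ev N (\<lambda>i j. if i = i0 \<and> j = j0 then d else 0) x y = d * x ^ i0 * y ^ j0"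
proof -
  assume "i0 \<le> N" "j0 \<le> N"
  have eq: "\<And>i j. (if i = i0 \<and> j = j0 then d else 0) * x^i * y^j
     = (if j = j0 then (if i = i0 then d * x^i0 * y^j0 else 0) else 0)" by auto
  show ?thesis unfolding ev_def eq using \<open>i0 \<le> N\<close> \<open>j0 \<le> N\<close> by simp
qed

lemma sum_tri:
  fixes f :: "nat \<Rightarrow> nat \<Rightarrow> real"
  assumes "n \<le> N" "\<forall>i j. n < i + j \<longrightarrow> f i j = 0"
  shows "(\<Sum>i\<le>N. \<Sum>j\<le>N. f i j) = (\<Sum>i\<le>n. \<Sum>j\<le>n-i. f i j)"
proof -
  have "(\<Sum>i\<le>N. \<Sum>j\<le>N. f i j) = (\<Sum>i\<le>n. \<Sum>j\<le>N. f i j)"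
  proof (rule sum.mono_neutral_right)
    show "\<forall>i\<in>{..N} - {..n}. (\<Sum>j\<le>N. f i j) = 0" using assms(2) by auto
  qed (use assms(1) in auto)
  also have "\<dots> = (\<Sum>i\<le>n. \<Sum>j\<le>n-i. f i j)"
  proof (rule sum.cong[OF refl])
    fix i assume "i \<in> {..n}"
    show "(\<Sum>j\<le>N. f i j) = (\<Sum>j\<le>n-i. f i j)"
    proof (rule sum.mono_neutral_right)
      show "\<forall>j\<in>{..N} - {..n - i}. f i j = 0"
      proof
        fix j assume "j \<in> {..N} - {..n - i}"
        then have "n < i + j" using \<open>i \<in> {..n}\<close> by auto
        then show "f i j = 0" using assms(2) by blast
      qed
    qed (use assms(1) in auto)
  qed
  finally show ?thesis .
qed

lemma poly_zero_off_pm1: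
  fixes p :: "real poly"
  assumes "\<forall>y. y^2 \<noteq> 1 \<longrightarrow> poly p y = 0"
  shows "p = 0"
proof (rule poly_zero_many_roots)
  let ?S = "(\<lambda>k. real k + 2) ` {..degree p}"
  show "finite ?S" by simp
  have "inj_on (\<lambda>k. real k + 2) {..degree p}" by (rule inj_onI) simp
  then show "card ?S > degree p" by (simp add: card_image)
  show "\<forall>x\<in>?S. poly p x = 0"
  proof
    fix x assume "x \<in> ?S"
    then have "x \<ge> 2" by auto
    then have "x^2 \<ge> 2^2" by (intro power_mono) auto
    then have "x^2 \<noteq> 1" by simp
    then show "poly p x = 0" using assms by simp
  qed
qed

lemma div2:
  fixes a :: "nat \<Rightarrow> nat \<Rightarrow> real"
  assumes bnd: "\<forall>i j. n < i + j + t \<longrightarrow> a i j = 0"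
    and z1: "\<forall>y. ev N a 1 y = 0" and z2: "\<forall>y. ev N a (-1) y = 0"
  shows "\<exists>b. (\<forall>i j. n < i + j + t + 2 \<longrightarrow> b i j = 0) \<and> (\<forall>x y. ev N a x y = (x^2 - 1) * ev N b x y)"
proof -
  define R where "R j = mkp N (\<lambda>i. a i j)" for j
  have polyR: "poly (R j) x = (\<Sum>i\<le>N. a i j * x ^ i)" for j x by (simp add: R_def poly_mkp)
  have R1: "poly (R j) 1 = 0" if "j \<le> N" for j
    using mkp_zero[of N "\<lambda>j. \<Sum>i\<le>N. a i j * 1 ^ i" j] z1 that by (simp add: ev_x polyR)
  have R2: "poly (R j) (-1) = 0" if "j \<le> N" for j
    using mkp_zero[of N "\<lambda>j. \<Sum>i\<le>N. a i j * (-1) ^ i" j] z2 that by (simp add: ev_x polyR)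
  define D :: "real poly" where "D = [:-1, 0, 1:]"
  have Dfac: "D = [:-1, 1:] * [:1, 1:]" by (simp add: D_def)
  have Ddvd: "D dvd R j" if jN: "j \<le> N" for j
  proof -
    obtain Q1 where Q1: "R j = [:-1, 1:] * Q1" using R1[OF jN] poly_eq_0_iff_dvd[of "R j" 1]
      by (auto elim: dvdE)
    have "poly (R j) (-1) = -2 * poly Q1 (-1)" unfolding Q1 by simp
    then have "poly Q1 (-1) = 0" using R2[OF jN] by simp
    then obtain Q2 where "Q1 = [:1, 1:] * Q2" using poly_eq_0_iff_dvd[of Q1 "-1"]
      by (auto elim: dvdE)
    then show ?thesis unfolding Dfac Q1 by (metis dvd_triv_left mult.assoc)
  qed
  define Q where "Q j = R j div D" for j
  have RQ: "R j = D * Q j" if "j \<le> N" for j using Ddvd[OF that] by (simp add: Q_def)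
  have degQ: "coeff (Q j) i = 0" if "j \<le> N" "n < i + j + t + 2 \<or> N < i" for i j
  proof (rule ccontr)
    assume nz: "coeff (Q j) i \<noteq> 0"
    then have Qnz: "Q j \<noteq> 0" by auto
    have "i \<le> degree (Q j)" using nz le_degree by blast
    moreover have "degree (R j) = degree D + degree (Q j)"
      unfolding RQ[OF that(1)] by (rule degree_mult_eq) (simp_all add: D_def Qnz)
    ultimately have id: "i + 2 \<le> degree (R j)" by (simp add: D_def)
    have "D \<noteq> 0" by (simp add: D_def)
    then have Rnz: "R j \<noteq> 0" unfolding RQ[OF that(1)] using Qnz by (simp only: mult_eq_0_iff) simp
    have "coeff (R j) (degree (R j)) \<noteq> 0" using Rnz by simp
    then have dN: "degree (R j) \<le> N" and ad: "a (degree (R j)) j \<noteq> 0"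
      by (auto simp: R_def coeff_mkp split: if_splits)
    have "\<not> n < degree (R j) + j + t" using ad bnd by blast
    then show False using that(2) id dN by linarith
  qed
  define b where "b i j = (if j \<le> N then coeff (Q j) i else 0)" for i j
  have "\<forall>i j. n < i + j + t + 2 \<longrightarrow> b i j = 0" using degQ by (simp add: b_def)
  moreover have "ev N a x y = (x^2 - 1) * ev N b x y" for x y
  proof -
    have "ev N a x y = (\<Sum>j\<le>N. poly (R j) x * y ^ j)" by (simp add: ev_rows polyR)
    also have "\<dots> = (\<Sum>j\<le>N. (x^2 - 1) * ((\<Sum>i\<le>N. b i j * x ^ i) * y ^ j))"
    proof (rule sum.cong[OF refl])
      fix j assume j: "j \<in> {..N}"
      have dq: "degree (Q j) \<le> N" by (rule degree_le) (use degQ j in auto)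
      have "poly D x = x^2 - 1" by (simp add: D_def power2_eq_square)
      moreover have "R j = D * Q j" using RQ j by simp
      ultimately have "poly (R j) x = (x^2 - 1) * poly (Q j) x" by (simp only: poly_mult)
      also have "poly (Q j) x = (\<Sum>i\<le>N. b i j * x ^ i)" using poly_le_sum[OF dq] j by (simp add: b_def)
      finally show "poly (R j) x * y ^ j = (x^2 - 1) * ((\<Sum>i\<le>N. b i j * x ^ i) * y ^ j)" by simp
    qed
    also have "\<dots> = (x^2 - 1) * ev N b x y" by (simp add: ev_rows sum_distrib_left)
    finally show ?thesis .
  qed
  ultimately show ?thesis by blast
qed



theorem theorem2p1:
  fixes k m :: nat and I :: "(real \<times> real) set" and v :: "real \<times> real \<Rightarrow> real"
  assumes hm: "m = 2 * k + 1"
    and hI_small: "k \<le> 1 \<Longrightarrow> I = {}"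
    and hI_fin: "finite I"
    and hI_card: "k \<ge> 2 \<Longrightarrow> card I = (2 * k - 1) * (k - 1)"
    and hI_int: "I \<subseteq> {-1<..<1} \<times> {-1<..<1}"
    and hI_uni: "k \<ge> 2 \<Longrightarrow> unisolvent (2 * k - 3) I"
    and hv: "v \<in> R_space m"
    and hvG: "\<forall>z \<in> gauss_boundary m. v z = 0"
    and hvI: "\<forall>z \<in> I. v z = 0"
  shows "v = (\<lambda>_. 0)"
proof -
  have m1: "m \<ge> 1" and modd: "odd m" using hm by auto
  obtain p d where hp: "p \<in> poly2_space m"
    and vdef: "v = (\<lambda>(x, y). p (x, y) + d * (x ^ m * y - x * y ^ m))"
    using hv by (auto simp: R_space_def)
  obtain c where pdef: "p = (\<lambda>(x, y). \<Sum>i\<le>m. \<Sum>j\<le>m - i. c i j * x ^ i * y ^ j)"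
    using hp by (auto simp: poly2_space_def)
  define d' where "d' = (if m = 1 then 0 else d)"
  have hd': "m = 1 \<Longrightarrow> d' = 0" by (simp add: d'_def)
  have vdef': "v (x, y) = p (x, y) + d' * (x ^ m * y - x * y ^ m)" for x y
    by (cases "m = 1") (simp_all add: vdef d'_def)
  define N where "N = Suc m"
  define c' where "c' = (\<lambda>i j. if i + j \<le> m then c i j else 0)"
  define a where "a = (\<lambda>i j. c' i j + (if i = m \<and> j = 1 then d' else 0) - (if i = 1 \<and> j = m then d' else 0))"
  have pev: "p (x, y) = ev N c' x y" for x y
  proof -
    have "ev N c' x y = (\<Sum>i\<le>m. \<Sum>j\<le>m - i. c' i j * x ^ i * y ^ j)"
      unfolding ev_def by (rule sum_tri) (auto simp: N_def c'_def)
    also have "\<dots> = p (x, y)" unfolding pdef by (auto simp: c'_def intro!: sum.cong)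
    finally show ?thesis by simp
  qed
  have vev: "v (x, y) = ev N a x y" for x y
  proof -
    have "ev N a x y = ev N (\<lambda>i j. c' i j + (if i = m \<and> j = 1 then d' else 0)) x y
        - ev N (\<lambda>i j. if i = 1 \<and> j = m then d' else 0) x y"
      unfolding a_def by (rule ev_diff)
    also have "\<dots> = ev N c' x y + d' * x ^ m * y ^ 1 - d' * x ^ 1 * y ^ m"
      by (simp add: ev_add ev_delta N_def m1)
    finally have "ev N a x y = p (x, y) + d' * x ^ m * y - d' * x * y ^ m" using pev[of x y] by simp
    then show ?thesis unfolding vdef' by (simp add: algebra_simps)
  qed
  define L where "L = legendre m"
  define lc where "lc = coeff L m"
  have lpos: "lc > 0" using leg_deg[of m] by (simp add: lc_def L_def)
  have L1: "poly L 1 = 1" by (simp add: L_def leg_one)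
  have Lm1: "poly L (-1) = -1" using modd by (simp add: L_def leg_mone)
  have gz: "v (1, g) = 0" "v (-1, g) = 0" "v (g, 1) = 0" "v (g, -1) = 0" if "g \<in> gauss_nodes m" for g
    using hvG that by (auto simp: gauss_boundary_def)
  have az1: "a i (Suc m) = 0" for i using m1 by (simp add: a_def c'_def)
  have az2: "a (Suc m) j = 0" for j using m1 by (simp add: a_def c'_def)
  define q1 where "q1 = mkp N (\<lambda>j. \<Sum>i\<le>N. a i j)"
  define q2 where "q2 = mkp N (\<lambda>j. \<Sum>i\<le>N. a i j * (-1) ^ i)"
  define q3 where "q3 = mkp N (\<lambda>i. \<Sum>j\<le>N. a i j)"
  define q4 where "q4 = mkp N (\<lambda>i. \<Sum>j\<le>N. a i j * (-1) ^ j)"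
  have e1: "v (1, y) = poly q1 y" for y by (simp add: vev ev_x q1_def)
  have e2: "v (-1, y) = poly q2 y" for y by (simp add: vev ev_x q2_def)
  have e3: "v (x, 1) = poly q3 x" for x by (simp add: vev ev_y q3_def)
  have e4: "v (x, -1) = poly q4 x" for x by (simp add: vev ev_y q4_def)
  have Nm: "\<And>k. m < k \<Longrightarrow> k \<le> N \<Longrightarrow> k = Suc m" by (simp add: N_def)
  have dq1: "degree q1 \<le> m" unfolding q1_def by (rule degree_mkp_le) (auto dest: Nm simp: az1)
  have dq2: "degree q2 \<le> m" unfolding q2_def by (rule degree_mkp_le) (auto dest: Nm simp: az1)
  have dq3: "degree q3 \<le> m" unfolding q3_def by (rule degree_mkp_le) (auto dest: Nm simp: az2)
  have dq4: "degree q4 \<le> m" unfolding q4_def by (rule degree_mkp_le) (auto dest: Nm simp: az2)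
  have i1: "q1 = smult (poly q1 1) L" unfolding L_def
    by (rule gauss_interp[OF m1 dq1]) (use gz e1 in auto)
  have i2: "q2 = smult (poly q2 1) L" unfolding L_def
    by (rule gauss_interp[OF m1 dq2]) (use gz e2 in auto)
  have i3: "q3 = smult (poly q3 1) L" unfolding L_def
    by (rule gauss_interp[OF m1 dq3]) (use gz e3 in auto)
  have i4: "q4 = smult (poly q4 1) L" unfolding L_def
    by (rule gauss_interp[OF m1 dq4]) (use gz e4 in auto)
  define V where "V = v (1, 1)"
  have p11: "poly q1 1 = V" "poly q3 1 = V" using e1[of 1] e3[of 1] by (simp_all add: V_def)
  have p1m: "poly q1 (-1) = - V" using p11 Lm1 by (subst i1) simp
  have p3m: "poly q3 (-1) = - V" using p11 Lm1 by (subst i3) simp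
  have p21: "poly q2 1 = - V" using e2[of 1] e3[of "-1"] p3m by simp
  have p41: "poly q4 1 = - V" using e4[of 1] e1[of "-1"] p1m by simp
  have c1: "coeff q1 m = V * lc" using p11 by (subst i1) (simp add: lc_def)
  have c2: "coeff q2 m = - V * lc" using p21 by (subst i2) (simp add: lc_def)
  have c3: "coeff q3 m = V * lc" using p11 by (subst i3) (simp add: lc_def)
  have c4: "coeff q4 m = - V * lc" using p41 by (subst i4) (simp add: lc_def)
  have aim: "a i m = (if i = 0 then c 0 m else 0) - (if i = 1 then d' else 0)" for i
    using hd' by (cases "m = 1") (auto simp: a_def c'_def)
  have ami: "a m j = (if j = 0 then c m 0 else 0) + (if j = 1 then d' else 0)" for j
    using hd' by (cases "m = 1") (auto simp: a_def c'_def)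
  have N1: "1 \<le> N" by (simp add: N_def)
  have mN: "m \<le> N" by (simp add: N_def)
  have s1: "coeff q1 m = c 0 m - d'"
    using mN N1 by (simp add: q1_def coeff_mkp aim sum_subtractf)
  have s2: "coeff q2 m = c 0 m + d'"
  proof -
    have pw: "a i m * (-1) ^ i = (if i = 0 then c 0 m else 0) + (if i = 1 then d' else 0)" for i
      by (cases "i = 0"; cases "i = 1") (simp_all add: aim)
    show ?thesis using mN N1 by (simp add: q2_def coeff_mkp pw sum.distrib)
  qed
  have s3: "coeff q3 m = c m 0 + d'"
    using mN N1 by (simp add: q3_def coeff_mkp ami sum.distrib)
  have s4: "coeff q4 m = c m 0 - d'"
  proof -
    have pw: "a m j * (-1) ^ j = (if j = 0 then c m 0 else 0) - (if j = 1 then d' else 0)" for j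
      by (cases "j = 0"; cases "j = 1") (simp_all add: ami)
    show ?thesis using mN N1 by (simp add: q4_def coeff_mkp pw sum_subtractf)
  qed
  have "V * lc = 0" using c1 c2 c3 c4 s1 s2 s3 s4 by linarith
  then have V0: "V = 0" using lpos by simp
  have d0: "d' = 0" using c1 c2 s1 s2 V0 by simp
  have z1: "v (1, y) = 0" for y using e1 i1 p11 V0 by (metis poly_0 smult_0_left)
  have z3: "v (x, 1) = 0" for x using e3 i3 p11 V0 by (metis poly_0 smult_0_left)
  have z2: "v (-1, y) = 0" for y using e2 i2 p21 V0 by (metis poly_0 smult_0_left minus_zero)
  have z4: "v (x, -1) = 0" for x using e4 i4 p41 V0 by (metis poly_0 smult_0_left minus_zero)
  have abnd: "\<forall>i j. m < i + j + 0 \<longrightarrow> a i j = 0"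
  proof (intro allI impI)
    fix i j assume "m < i + j + 0"
    then have "\<not> i + j \<le> m" by simp
    then have ci: "c' i j = 0" by (simp add: c'_def)
    have "a i j = c' i j + (if i = m \<and> j = 1 then d' else 0) - (if i = 1 \<and> j = m then d' else 0)"
      by (simp only: a_def)
    also have "\<dots> = 0" by (simp only: ci d0 if_cancel) 
    finally show "a i j = 0" .
  qed
  have za1: "\<forall>y. ev N a 1 y = 0" by (intro allI) (simp only: vev[symmetric] z1)
  have za2: "\<forall>y. ev N a (-1) y = 0" by (intro allI) (simp only: vev[symmetric] z2)
  obtain b where bbnd: "\<forall>i j. m < i + j + 0 + 2 \<longrightarrow> b i j = 0"
    and bev: "\<forall>x y. ev N a x y = (x^2 - 1) * ev N b x y"
    using div2[OF abnd za1 za2] by blast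
  define bT where "bT = (\<lambda>i j. b j i)"
  have bTbnd: "\<forall>i j. m < i + j + 2 \<longrightarrow> bT i j = 0" 
  proof (intro allI impI)
    fix i j assume "m < i + j + 2"
    then have "m < j + i + 0 + 2" by simp
    then have "b j i = 0" using bbnd by blast
    then show "bT i j = 0" by (simp only: bT_def)
  qed
  have bT1: "ev N bT 1 y = 0" for y
  proof -
    have "\<forall>x. x^2 \<noteq> 1 \<longrightarrow> poly (mkp N (\<lambda>i. \<Sum>j\<le>N. b i j * 1 ^ j)) x = 0"
    proof (intro allI impI)
      fix x :: real assume "x^2 \<noteq> 1"
      have "ev N a x 1 = 0" by (simp only: vev[symmetric] z3)
      moreover have "ev N a x 1 = (x^2 - 1) * ev N b x 1" using bev by blast
      ultimately have "0 = (x^2 - 1) * ev N b x 1" by simp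
      then have "ev N b x 1 = 0" using \<open>x^2 \<noteq> 1\<close> by simp
      then show "poly (mkp N (\<lambda>i. \<Sum>j\<le>N. b i j * 1 ^ j)) x = 0" by (simp add: ev_y)
    qed
    then have "mkp N (\<lambda>i. \<Sum>j\<le>N. b i j * 1 ^ j) = 0" by (rule poly_zero_off_pm1)
    moreover have "ev N bT 1 y = ev N b y 1" unfolding bT_def by (rule ev_transp)
    moreover have "ev N b y 1 = poly (mkp N (\<lambda>i. \<Sum>j\<le>N. b i j * 1 ^ j)) y" by (rule ev_y)
    ultimately show ?thesis by simp
  qed
  have bT2: "ev N bT (-1) y = 0" for y
  proof -
    have "\<forall>x. x^2 \<noteq> 1 \<longrightarrow> poly (mkp N (\<lambda>i. \<Sum>j\<le>N. b i j * (-1) ^ j)) x = 0"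
    proof (intro allI impI)
      fix x :: real assume "x^2 \<noteq> 1"
      have "ev N a x (-1) = 0" by (simp only: vev[symmetric] z4)
      moreover have "ev N a x (-1) = (x^2 - 1) * ev N b x (-1)" using bev by blast
      ultimately have "0 = (x^2 - 1) * ev N b x (-1)" by simp
      then have "ev N b x (-1) = 0" using \<open>x^2 \<noteq> 1\<close> by simp
      then show "poly (mkp N (\<lambda>i. \<Sum>j\<le>N. b i j * (-1) ^ j)) x = 0" by (simp add: ev_y)
    qed
    then have "mkp N (\<lambda>i. \<Sum>j\<le>N. b i j * (-1) ^ j) = 0" by (rule poly_zero_off_pm1)
    moreover have "ev N bT (-1) y = ev N b y (-1)" unfolding bT_def by (rule ev_transp)
    moreover have "ev N b y (-1) = poly (mkp N (\<lambda>i. \<Sum>j\<le>N. b i j * (-1) ^ j)) y" by (rule ev_y)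
    ultimately show ?thesis by simp
  qed
  obtain w where wbnd: "\<forall>i j. m < i + j + 2 + 2 \<longrightarrow> w i j = 0"
    and wev: "\<forall>x y. ev N bT x y = (x^2 - 1) * ev N w x y"
    using div2[OF bTbnd] bT1 bT2 by blast
  define wT where "wT = (\<lambda>i j. w j i)"
  have wTbnd: "\<forall>i j. m < i + j + 4 \<longrightarrow> wT i j = 0" 
  proof (intro allI impI)
    fix i j assume "m < i + j + 4"
    then have "m < j + i + 2 + 2" by simp
    then have "w j i = 0" using wbnd by blast
    then show "wT i j = 0" by (simp only: wT_def)
  qed
  define W where "W = (\<lambda>(x::real, y::real). ev N wT x y)"
  have vW: "v (x, y) = (x^2 - 1) * (y^2 - 1) * W (x, y)" for x y
  proof -
    have "v (x, y) = ev N a x y" by (rule vev)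
    also have "\<dots> = (x^2 - 1) * ev N b x y" using bev by blast
    also have "ev N b x y = ev N bT y x" unfolding bT_def by (rule ev_transp[symmetric])
    also have "\<dots> = (y^2 - 1) * ev N w y x" using wev by blast
    also have "ev N w y x = W (x, y)" unfolding W_def wT_def by (simp only: ev_transp[where a=w] case_prod_conv)
    finally show ?thesis by simp
  qed
  have W0: "W = (\<lambda>_. 0)"
  proof (cases "k \<le> 1")
    case True
    then have "\<forall>i j. wT i j = 0" using wTbnd hm by auto
    then show ?thesis by (auto simp: W_def ev_def)
  next
    case False
    then have k2: "k \<ge> 2" by simp
    have WP: "W \<in> poly2_space (2 * k - 3)"
      unfolding poly2_space_def
    proof (intro CollectI exI[of _ wT] ext, clarify)
      fix x y :: real
      show "W (x, y) = (\<Sum>i\<le>2 * k - 3. \<Sum>j\<le>2 * k - 3 - i. wT i j * x ^ i * y ^ j)"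
        unfolding W_def ev_def case_prod_conv
      proof (rule sum_tri)
        show "2 * k - 3 \<le> N" using hm by (simp add: N_def)
        show "\<forall>i j. 2 * k - 3 < i + j \<longrightarrow> wT i j * x ^ i * y ^ j = 0"
        proof (intro allI impI)
          fix i j assume "2 * k - 3 < i + j"
          then have "m < i + j + 4" using hm k2 by linarith
          then show "wT i j * x ^ i * y ^ j = 0" using wTbnd by simp
        qed
      qed
    qed
    have ZP: "(\<lambda>_. 0) \<in> poly2_space (2 * k - 3)"
      unfolding poly2_space_def by (intro CollectI exI[of _ "\<lambda>_ _. 0"]) auto
    have "\<forall>z\<in>I. W z = (\<lambda>_. 0) z"
    proof
      fix z assume zI: "z \<in> I"
      obtain x y where z: "z = (x, y)" by fastforce
      have "-1 < x" "x < 1" "-1 < y" "y < 1" using hI_int zI z by auto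
      then have "x^2 \<noteq> 1" "y^2 \<noteq> 1" by (auto simp: power2_eq_1_iff)
      moreover have "v (x, y) = 0" using hvI zI z by simp
      ultimately show "W z = (\<lambda>_. 0) z" using vW[of x y] z by simp
    qed
    then show ?thesis using hI_uni[OF k2] WP ZP by (auto simp: unisolvent_def)
  qed
  show ?thesis
  proof
    fix z :: "real \<times> real"
    obtain x y where z: "z = (x, y)" by fastforce
    show "v z = 0" using vW[of x y] W0 z by simp
  qed
qed


end
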